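(* Let $X=\prod_{i=1}^N X_i$ with $X_i\subseteq\mathbb R^{n_i}$, $n=\sum_i n_i$, let $\epsilon=(\epsilon_1,\dots,\epsilon_N)$ with all $\epsilon_i>0$, and let $X_c^\epsilon\triangleq X+\prod_{i=1}^N C_{n_i}(0,\epsilon_i)$. Let $F=(F_1;\dots;F_N):X_c^\epsilon\to\mathbb R^n$ and suppose there are constants $C_i'>0$ with $\|F_i(x)\|\le C_i'$ for all $x\in X_c^\epsilon$ and all $i$; set $C'=(C_1',\dots,C_N')$. Let $z=(z_1;\dots;z_N)$ where the $z_i$ are independent and $z_i$ is uniformly distributed on $C_{n_i}(0,\epsilon_i)$, and define $F^\epsilon(x)\triangleq(\mathsf E[F_1(x+z)];\dots;\mathsf E[F_N(x+z)])$ for $x\in X$. Then: (a) $\|F^\epsilon(x)\|\le\|C'\|$ for all $x\in X$; (b) for all $x,y\in X$, $\|F^\epsilon(x)-F^\epsilon(y)\|\le\dfrac{\sqrt n\,\|C'\|}{\min_{j=1,\dots,N}\epsilon_j}\|x-y\|$.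
   Context: $C_m(x,\rho)=\{y\in\mathbb R^m:\|y-x\|_\infty\le\rho\}$ is the cube centered at $x$ with edge length $2\rho$ and edges along the coordinate axes. $F$ is assumed (Borel) measurable so that the expectations are defined. *)

theory Defs
  imports "HOL-Probability.Probability"
begin

text \<open>R^n is real^'n; the coordinates are partitioned into blocks by blk :: 'n => 'b,
  block i corresponding to R^(n_i).\<close>

definition block_coords :: "('n \<Rightarrow> 'b) \<Rightarrow> 'b \<Rightarrow> 'n set" where
  "block_coords blk i = {k. blk k = i}"

definition block_part :: "('n \<Rightarrow> 'b) \<Rightarrow> 'b \<Rightarrow> real^'n \<Rightarrow> ('n \<Rightarrow> real)" where
  "block_part blk i x = restrict (\<lambda>k. x $ k) (block_coords blk i)"

definition block_norm :: "('n::finite \<Rightarrow> 'b) \<Rightarrow> 'b \<Rightarrow> real^'n \<Rightarrow> real" where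
  "block_norm blk i v = sqrt (\<Sum>k\<in>block_coords blk i. (v $ k)^2)"

definition cube_prod :: "('n \<Rightarrow> 'b) \<Rightarrow> ('b \<Rightarrow> real) \<Rightarrow> (real^'n) set" where
  "cube_prod blk eps = {z. \<forall>k. \<bar>z $ k\<bar> \<le> eps (blk k)}"

definition enlarged :: "(real^'n) set \<Rightarrow> ('n \<Rightarrow> 'b) \<Rightarrow> ('b \<Rightarrow> real) \<Rightarrow> (real^'n) set" where
  "enlarged X blk eps = {x + z | x z. x \<in> X \<and> z \<in> cube_prod blk eps}"

text \<open>F^eps(x) = E[F(x+z)], z uniform on the product of cubes (equivalently: independent
  uniform z_i on the cubes).\<close>
definition smoothed :: "(real^'n::finite \<Rightarrow> real^'n) \<Rightarrow> ('n \<Rightarrow> 'b) \<Rightarrow> ('b \<Rightarrow> real) \<Rightarrow> real^'n \<Rightarrow> real^'n" where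
  "smoothed F blk eps x =
     integral\<^sup>L (uniform_measure lborel (cube_prod blk eps)) (\<lambda>z. F (x + z))"

end

theory Submission
  imports Defs
begin

lemma prod_one_minus:
  fixes t :: "'a \<Rightarrow> real"
  assumes "finite S" "\<forall>k\<in>S. 0 \<le> t k \<and> t k \<le> 1"
  shows "0 \<le> (\<Prod>k\<in>S. 1 - t k) \<and> (\<Prod>k\<in>S. 1 - t k) \<le> 1 \<and> 1 - (\<Prod>k\<in>S. 1 - t k) \<le> (\<Sum>k\<in>S. t k)"
  using assms
proof (induction S rule: finite_induct)
  case empty then show ?case by simp
next
  case (insert a S)
  define Q where "Q = (\<Prod>k\<in>S. 1 - t k)"
  from insert have IH: "0 \<le> Q" "Q \<le> 1" "1 - Q \<le> (\<Sum>k\<in>S. t k)" and ta: "0 \<le> t a" "t a \<le> 1"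
    by (auto simp: Q_def)
  have h1: "t a * Q \<le> t a" using IH ta by (simp add: mult_left_le)
  have h2: "(1 - t a) * Q \<le> 1" using IH ta by (simp add: mult_le_one)
  have h3: "0 \<le> (1 - t a) * Q" using IH ta by simp
  show ?case using insert(1,2) IH ta h1 h2 h3 by (simp add: Q_def[symmetric] algebra_simps)
qed

lemma norm_blocks:
  fixes blk :: "'n::finite \<Rightarrow> 'b::finite" and v :: "real^'n"
  shows "(norm v)^2 = (\<Sum>i\<in>UNIV. (block_norm blk i v)^2)"
proof -
  have "(norm v)^2 = (\<Sum>k\<in>UNIV. (v$k)^2)"
    unfolding norm_vec_def L2_set_def by (simp add: sum_nonneg)
  also have "\<dots> = (\<Sum>i\<in>UNIV. \<Sum>k\<in>block_coords blk i. (v$k)^2)"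
    using sum.group[of "UNIV::'n set" "UNIV::'b set" blk "\<lambda>k. (v$k)^2"]
    by (simp add: block_coords_def)
  also have "\<dots> = (\<Sum>i\<in>UNIV. (block_norm blk i v)^2)"
    by (simp add: block_norm_def sum_nonneg)
  finally show ?thesis .
qed

theorem proposition7:
  fixes blk :: "'n::finite \<Rightarrow> 'b::finite"
    and Xs :: "'b \<Rightarrow> ('n \<Rightarrow> real) set"
    and X :: "(real^'n) set"
    and eps Cp :: "'b \<Rightarrow> real"
    and F :: "real^'n \<Rightarrow> real^'n"
  assumes X_prod: "X = {x. \<forall>i. block_part blk i x \<in> Xs i}"
    and eps_pos: "\<forall>i. eps i > 0"
    and Cp_pos: "\<forall>i. Cp i > 0"
    and F_meas: "F \<in> borel_measurable borel"
    and F_bound: "\<forall>x\<in>enlarged X blk eps. \<forall>i. block_norm blk i (F x) \<le> Cp i"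
  shows "(\<forall>x\<in>X. norm (smoothed F blk eps x) \<le> sqrt (\<Sum>i\<in>UNIV. (Cp i)^2))
       \<and> (\<forall>x\<in>X. \<forall>y\<in>X. norm (smoothed F blk eps x - smoothed F blk eps y)
            \<le> sqrt (real CARD('n)) * sqrt (\<Sum>i\<in>UNIV. (Cp i)^2) / Min (range eps) * norm (x - y))"
proof -
  define e :: "real^'n" where "e = (\<chi> k. eps (blk k))"
  define C where "C = cube_prod blk eps"
  define A where "A = (\<lambda>x::real^'n. cbox (x - e) (x + e))"
  define P where "P = (\<Prod>k\<in>UNIV. 2 * eps (blk k))"
  define B where "B = sqrt (\<Sum>i\<in>UNIV. (Cp i)^2)"
  define m where "m = Min (range eps)"
  have e_pos: "\<And>k. e$k > 0" using eps_pos by (simp add: e_def)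
  have P_pos: "P > 0" unfolding P_def using eps_pos by (simp add: prod_pos)
  have C_eq: "C = cbox (-e) e"
    by (auto simp: C_def cube_prod_def mem_box_cart e_def abs_le_iff minus_le_iff)
  have memA: "\<And>x w. w \<in> A x \<longleftrightarrow> w - x \<in> C"
    by (auto simp: A_def C_eq mem_box_cart algebra_simps)
  have measA: "measure lborel (A x) = P" for x
  proof -
    have "x \<in> A x" using e_pos by (auto simp: A_def mem_box_cart less_imp_le)
    then have "A x \<noteq> {}" by auto
    then have "measure lborel (A x) = (\<Prod>i\<in>UNIV. (x + e)$i - (x - e)$i)"
      unfolding A_def by (rule content_cbox_cart)
    also have "\<dots> = P" by (simp add: P_def e_def)
    finally show ?thesis .
  qed
  have finA: "emeasure lborel (A x) < \<infinity>" for x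
    unfolding A_def by (rule emeasure_lborel_cbox_finite)
  have C_A: "C = A 0" by (simp add: C_eq A_def)
  have Fm[measurable]: "F \<in> borel_measurable lborel" using F_meas by simp
  have Fb: "norm (F w) \<le> B" if "w \<in> enlarged X blk eps" for w
  proof -
    have "(norm (F w))^2 = (\<Sum>i\<in>UNIV. (block_norm blk i (F w))^2)" by (rule norm_blocks)
    also have "\<dots> \<le> (\<Sum>i\<in>UNIV. (Cp i)^2)"
      using F_bound that by (intro sum_mono power_mono) (auto simp: block_norm_def sum_nonneg)
    finally show ?thesis unfolding B_def by (simp add: real_le_rsqrt)
  qed
  have AX: "w \<in> enlarged X blk eps" if "x \<in> X" "w \<in> A x" for x w
  proof -
    have "w - x \<in> cube_prod blk eps" using that memA C_def by auto
    then show ?thesis unfolding enlarged_def using that(1)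
      by (intro CollectI exI[of _ x] exI[of _ "w - x"]) auto
  qed
  have rep: "smoothed F blk eps x = (1/P) *\<^sub>R (\<integral>w. indicator (A x) w *\<^sub>R F w \<partial>lborel)" for x
  proof -
    have em: "emeasure lborel C = ennreal P"
      using measA[of 0] finA[of 0] C_A by (simp add: emeasure_eq_ennreal_measure)
    have U: "uniform_measure lborel C = density lborel (\<lambda>z. ennreal (indicator C z / P))"
    proof -
      have "(\<lambda>z. indicator C z / emeasure lborel C) = (\<lambda>z. ennreal (indicator C z / P))"
        using P_pos by (auto simp: em divide_ennreal ennreal_1[symmetric] simp del: ennreal_1 split: split_indicator)
      then show ?thesis by (simp add: uniform_measure_def)
    qed
    have "smoothed F blk eps x = (\<integral>z. (indicator C z / P) *\<^sub>R F (x + z) \<partial>lborel)"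
      unfolding smoothed_def C_def[symmetric] U
      by (subst integral_density) (auto simp: P_pos less_imp_le C_A A_def)
    also have "(\<lambda>z. (indicator C z / P) *\<^sub>R F (x + z)) = (\<lambda>z. (1/P) *\<^sub>R (indicator (A x) (x + z) *\<^sub>R F (x + z)))"
      by (auto simp: memA indicator_def)
    also have "(\<integral>z. (1/P) *\<^sub>R (indicator (A x) (x + z) *\<^sub>R F (x + z)) \<partial>lborel)
        = (1/P) *\<^sub>R (\<integral>z. indicator (A x) (x + z) *\<^sub>R F (x + z) \<partial>lborel)"
      by (rule integral_scaleR_right)
    also have "(\<integral>z. indicator (A x) (x + z) *\<^sub>R F (x + z) \<partial>lborel) = (\<integral>w. indicator (A x) w *\<^sub>R F w \<partial>lborel)"
    proof -
      have "(\<integral>w. indicator (A x) w *\<^sub>R F w \<partial>lborel) = (\<integral>w. indicator (A x) w *\<^sub>R F w \<partial>distr lborel borel ((+) x))"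
        by (simp add: lborel_distr_plus)
      also have "\<dots> = (\<integral>z. indicator (A x) (x + z) *\<^sub>R F (x + z) \<partial>lborel)"
        by (rule integral_distr) (auto simp: A_def)
      finally show ?thesis by simp
    qed
    finally show ?thesis .
  qed
  have intA: "integrable lborel (\<lambda>w. indicator (A x) w *\<^sub>R F w)" if "x \<in> X" for x
    using finA[of x, unfolded A_def] by (intro integrableI_bounded_set_indicator[where B=B]) (auto simp: A_def intro!: Fb AX[OF that])
  have intI: "integrable lborel (indicator (A x) :: _ \<Rightarrow> real)" for x
    using finA[of x] by (auto simp: A_def)
  have partA: "norm (smoothed F blk eps x) \<le> B" if "x \<in> X" for x
  proof -
    have "norm (smoothed F blk eps x) = (1/P) * norm (\<integral>w. indicator (A x) w *\<^sub>R F w \<partial>lborel)"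
      using P_pos by (simp add: rep)
    also have "\<dots> \<le> (1/P) * (\<integral>w. norm (indicator (A x) w *\<^sub>R F w) \<partial>lborel)"
      using P_pos by (intro mult_left_mono integral_norm_bound) auto
    also have "\<dots> \<le> (1/P) * (\<integral>w. B * indicator (A x) w \<partial>lborel)"
      using P_pos integrable_norm[OF intA[OF that]] intI[of x]
      by (intro mult_left_mono integral_mono)
        (auto split: split_indicator intro!: Fb AX[OF that])
    also have "\<dots> = B"
      using P_pos measA[of x] by (simp add: A_def)
    finally show ?thesis .
  qed
  have partB: "norm (smoothed F blk eps x - smoothed F blk eps y) \<le> sqrt (real CARD('n)) * B / m * norm (x - y)"
    if xX: "x \<in> X" and yX: "y \<in> X" for x y
  proof -
    define I where "I = A x \<inter> A y"
    define Q where "Q = measure lborel I"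
    define d where "d = (\<lambda>k. \<bar>x$k - y$k\<bar>)"
    define t where "t = (\<lambda>k. d k / (2 * eps (blk k)))"
    have finI: "emeasure lborel I < \<infinity>" unfolding I_def
      by (rule le_less_trans[OF emeasure_mono finA[of x]]) (auto simp: A_def)
    have intII: "integrable lborel (indicator I :: _ \<Rightarrow> real)"
      using finI by (auto simp: I_def A_def)
    have "norm (smoothed F blk eps x - smoothed F blk eps y)
        = (1/P) * norm (\<integral>w. indicator (A x) w *\<^sub>R F w - indicator (A y) w *\<^sub>R F w \<partial>lborel)"
      using P_pos intA[OF xX] intA[OF yX]
      by (simp add: rep scaleR_diff_right[symmetric])
    also have "\<dots> \<le> (1/P) * (\<integral>w. norm (indicator (A x) w *\<^sub>R F w - indicator (A y) w *\<^sub>R F w) \<partial>lborel)"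
      using P_pos by (intro mult_left_mono integral_norm_bound) auto
    also have "\<dots> \<le> (1/P) * (\<integral>w. B * indicator (A x) w + B * indicator (A y) w - (2 * B) * indicator I w \<partial>lborel)"
    proof -
      have pw: "norm (indicator (A x) w *\<^sub>R F w - indicator (A y) w *\<^sub>R F w)
          \<le> B * indicator (A x) w + B * indicator (A y) w - (2 * B) * indicator I w" for w
      proof (cases "w \<in> A x"; cases "w \<in> A y")
        assume "w \<in> A x" "w \<notin> A y" then show ?thesis using Fb[OF AX[OF xX]] by (simp add: I_def)
      next
        assume "w \<notin> A x" "w \<in> A y" then show ?thesis using Fb[OF AX[OF yX]] by (simp add: I_def)
      qed (auto simp: I_def)
      show ?thesis
      using P_pos integrable_norm[OF Bochner_Integration.integrable_diff[OF intA[OF xX] intA[OF yX]]] intI[of x] intI[of y] intII pw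
      by (intro mult_left_mono integral_mono) auto
    qed
    also have "\<dots> = (1/P) * (B * P + B * P - 2 * B * Q)"
      using intI[of x] intI[of y] intII measA[of x] measA[of y]
      by (simp add: Q_def A_def I_def)
    also have "\<dots> = 2 * B * ((P - Q) / P)" using P_pos by (simp add: field_simps)
    also have "\<dots> \<le> 2 * B * (\<Sum>k\<in>UNIV. t k)"
    proof -
      have B0: "0 \<le> B" by (simp add: B_def sum_nonneg)
      have t0: "0 \<le> t k" for k using eps_pos[rule_format, of "blk k"] by (simp add: t_def d_def)
      define lo :: "real^'n" where "lo = (\<chi> k. max (x$k) (y$k) - e$k)"
      define hi :: "real^'n" where "hi = (\<chi> k. min (x$k) (y$k) + e$k)"
      have I_eq: "I = cbox lo hi"
        by (auto simp: I_def A_def mem_box_cart lo_def hi_def) (smt (verit))+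
      have key: "P - Q \<le> P * (\<Sum>k\<in>UNIV. t k)"
      proof (cases "\<forall>k. t k \<le> 1")
        case True
        have dk: "d k \<le> 2 * eps (blk k)" for k
          using True[rule_format, of k] eps_pos by (simp add: t_def field_simps)
        have "lo \<in> cbox lo hi" using dk
          by (auto simp: mem_box_cart lo_def hi_def e_def d_def) (smt (verit))+
        then have "cbox lo hi \<noteq> {}" by auto
        then have "Q = (\<Prod>k\<in>UNIV. hi$k - lo$k)"
          unfolding Q_def I_eq by (rule content_cbox_cart)
        also have "\<dots> = (\<Prod>k\<in>UNIV. (2 * eps (blk k)) * (1 - t k))"
          using eps_pos by (intro prod.cong refl) (auto simp: hi_def lo_def e_def d_def t_def field_simps less_imp_neq[OF eps_pos[rule_format], symmetric] max_def min_def abs_if algebra_simps)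
        also have "\<dots> = P * (\<Prod>k\<in>UNIV. 1 - t k)"
          by (simp add: P_def prod.distrib)
        finally have "P - Q = P * (1 - (\<Prod>k\<in>UNIV. 1 - t k))" by (simp add: algebra_simps)
        also have "\<dots> \<le> P * (\<Sum>k\<in>UNIV. t k)"
          using prod_one_minus[of UNIV t] True t0 P_pos by (intro mult_left_mono) auto
        finally show ?thesis .
      next
        case False
        then obtain k where "t k > 1" by (auto simp: not_le)
        moreover have "t k \<le> (\<Sum>k\<in>UNIV. t k)" using t0 by (intro member_le_sum) auto
        ultimately have "1 \<le> (\<Sum>k\<in>UNIV. t k)" by simp
        moreover have "0 \<le> Q" by (simp add: Q_def)
        ultimately show ?thesis using P_pos
          by (smt (verit) mult_le_cancel_left1)
      qed
      then have "(P - Q) / P \<le> (\<Sum>k\<in>UNIV. t k)"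
        using P_pos by (simp add: pos_divide_le_eq mult.commute)
      then show ?thesis using B0 by (intro mult_left_mono) auto
    qed
    also have "\<dots> = B * (\<Sum>k\<in>UNIV. d k / eps (blk k))"
      by (simp add: t_def sum_distrib_left)
    also have "\<dots> \<le> B * (\<Sum>k\<in>UNIV. d k / m)"
    proof -
      have B0: "0 \<le> B" by (simp add: B_def sum_nonneg)
      have "m \<in> range eps" unfolding m_def by (intro Min_in) auto
      then have m0: "0 < m" using eps_pos by auto
      have "m \<le> eps i" for i unfolding m_def by (intro Min_le) auto
      then show ?thesis using B0 m0
        by (intro mult_left_mono sum_mono divide_left_mono) (auto simp: d_def eps_pos)
    qed
    also have "\<dots> \<le> sqrt (real CARD('n)) * B / m * norm (x - y)"
    proof -
      have B0: "0 \<le> B" by (simp add: B_def sum_nonneg)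
      have "m \<in> range eps" unfolding m_def by (intro Min_in) auto
      then have m0: "0 < m" using eps_pos by auto
      have nv: "norm (x - y) = L2_set (\<lambda>k. (x - y)$k) UNIV"
        unfolding norm_vec_def by (simp add: L2_set_def)
      have "(\<Sum>k\<in>UNIV. d k) \<le> sqrt (real CARD('n)) * norm (x - y)"
        using L2_set_mult_ineq[where f="\<lambda>k. (x - y)$k" and A=UNIV and g="\<lambda>_. 1::real"]
        by (simp add: d_def nv L2_set_constant mult.commute)
      then have "B * ((\<Sum>k\<in>UNIV. d k) / m) \<le> B * (sqrt (real CARD('n)) * norm (x - y) / m)"
        using B0 m0 by (intro mult_left_mono divide_right_mono) auto
      then show ?thesis by (simp add: sum_divide_distrib[symmetric] field_simps)
    qed
    finally show ?thesis .
  qed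
  show ?thesis using partA partB unfolding B_def m_def by blast
qed

end
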